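(* Let $a\ge b\ge1$ be integers and define $c_j,d_j$ ($j\in\mathbb Z_+$) by $c_0=d_0=0$, $c_1=d_1=1$, $c_{k+2}+c_k=a d_{k+1}$, $d_{k+2}+d_k=b c_{k+1}$. Then the inequalities $$bc_k^2+ad_{k+1}^2-abc_kd_{k+1}+abc_k-2ad_{k+1}+a\le0$$ and $$bc_{k+1}^2+ad_k^2-abd_kc_{k+1}-2bc_{k+1}+abd_k+b\le0$$ hold (1) for all $k\ge1$ if $b\ge2$, and (2) for all $k\ge2$ if $b=1$ and $a\ge5$.
   Context: $\mathbb Z_+=\{0,1,2,\dots\}$. *)

theory Defs
  imports Main
begin

fun cd_seq :: "int \<Rightarrow> int \<Rightarrow> nat \<Rightarrow> int \<times> int" where
  "cd_seq a b 0 = (0, 0)"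
| "cd_seq a b (Suc 0) = (1, 1)"
| "cd_seq a b (Suc (Suc k)) =
     (a * snd (cd_seq a b (Suc k)) - fst (cd_seq a b k),
      b * fst (cd_seq a b (Suc k)) - snd (cd_seq a b k))"

definition cseq :: "int \<Rightarrow> int \<Rightarrow> nat \<Rightarrow> int" where
  "cseq a b k = fst (cd_seq a b k)"

definition dseq :: "int \<Rightarrow> int \<Rightarrow> nat \<Rightarrow> int" where
  "dseq a b k = snd (cd_seq a b k)"

lemma cseq_dseq_rec:
  "cseq a b 0 = 0" "dseq a b 0 = 0" "cseq a b 1 = 1" "dseq a b 1 = 1"
  "cseq a b (k + 2) + cseq a b k = a * dseq a b (k + 1)"
  "dseq a b (k + 2) + dseq a b k = b * cseq a b (k + 1)"
  by (simp_all add: cseq_def dseq_def)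

end

theory Submission
  imports Defs
begin

lemma mono_seq:
  fixes L :: "nat \<Rightarrow> int" and m :: int
  assumes rec: "\<And>n. L (n+2) = m * L (n+1) - L n" and m: "m \<ge> 2"
    and z: "0 \<le> L 0" and o: "L 0 \<le> L 1"
  shows "L n \<le> L (Suc n) \<and> 0 \<le> L n"
proof (induction n)
  case 0
  then show ?case using z o by simp
next
  case (Suc n)
  have h1: "0 \<le> L (Suc n)" using Suc by linarith
  have "L (Suc n) \<le> (m - 1) * L (Suc n)"
    using mult_right_mono[OF _ h1, of 1 "m - 1"] m by simp
  moreover have "L (Suc (Suc n)) = (m - 1) * L (Suc n) + L (Suc n) - L n"
    using rec[of n] by (simp add: algebra_simps)
  ultimately show ?case using Suc h1 by simp
qed

lemma mono_seq_le:
  fixes L :: "nat \<Rightarrow> int" and m :: int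
  assumes rec: "\<And>n. L (n+2) = m * L (n+1) - L n" and m: "m \<ge> 2"
    and z: "0 \<le> L 0" and o: "L 0 \<le> L 1" and ij: "i \<le> j"
  shows "L i \<le> L j"
proof -
  have "\<And>n. L n \<le> L (Suc n)" using mono_seq[OF rec m z o] by blast
  then show ?thesis using lift_Suc_mono_le[of L i j] ij by blast
qed

lemma qinv:
  fixes a b x y X Y :: int
  assumes "X = a*y - x" "Y = b*X - y"
  shows "b*X^2 + a*Y^2 - a*b*X*Y = b*x^2 + a*y^2 - a*b*x*y"
  unfolding assms(2) unfolding assms(1) by (simp add: power2_eq_square algebra_simps)

theorem lemma3p5:
  fixes a b :: int
  assumes "a \<ge> b" and "b \<ge> 1"
  defines "c \<equiv> cseq a b" and "d \<equiv> dseq a b"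
  shows "\<forall>k::nat. ((b \<ge> 2 \<and> k \<ge> 1) \<or> (b = 1 \<and> a \<ge> 5 \<and> k \<ge> 2)) \<longrightarrow>
     b * (c k)^2 + a * (d (k+1))^2 - a * b * c k * d (k+1) + a * b * c k - 2 * a * d (k+1) + a \<le> 0
   \<and> b * (c (k+1))^2 + a * (d k)^2 - a * b * d k * c (k+1) - 2 * b * c (k+1) + a * b * d k + b \<le> 0"
proof (intro allI impI)
  fix k :: nat
  assume H: "(b \<ge> 2 \<and> k \<ge> 1) \<or> (b = 1 \<and> a \<ge> 5 \<and> k \<ge> 2)"
  have R1: "c (k+2) = a * d (k+1) - c k" for k
    using cseq_dseq_rec(5)[of a b k] unfolding c_def d_def by linarith
  have R2: "d (k+2) = b * c (k+1) - d k" for k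
    using cseq_dseq_rec(6)[of a b k] unfolding c_def d_def by linarith
  have c0: "c 0 = 0" and d0: "d 0 = 0" and c1: "c 1 = 1" and d1: "d 1 = 1"
    unfolding c_def d_def using cseq_dseq_rec by auto
  have c2: "c 2 = a" using R1[of 0] c0 d1 by (simp add: numeral_eq_Suc)
  have d2: "d 2 = b" using R2[of 0] d0 c1 by (simp add: numeral_eq_Suc)
  have c3: "c 3 = a*b - 1" using R1[of 1] c1 d2 by (simp add: numeral_eq_Suc)
  have d3: "d 3 = a*b - 1" using R2[of 1] d1 c2 by (simp add: numeral_eq_Suc mult.commute)
  have "c 4 = a * d 3 - c 2" using R1[of 2] by (simp add: numeral_eq_Suc)
  then have c4: "c 4 = a*a*b - 2*a" using c2 d3 by (simp add: algebra_simps)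
  have "d 4 = b * c 3 - d 2" using R2[of 2] by (simp add: numeral_eq_Suc)
  then have d4: "d 4 = a*b*b - 2*b" using d2 c3 by (simp add: algebra_simps)
  have C4: "c (k+4) = (a*b-2) * c (k+2) - c k" for k
  proof -
    have e1: "c (k+4) = a * d (k+3) - c (k+2)" using R1[of "k+2"] by (simp add: numeral_eq_Suc)
    have e2: "d (k+3) = b * c (k+2) - d (k+1)" using R2[of "k+1"] by (simp add: numeral_eq_Suc)
    show ?thesis using e1 e2 R1[of k] by (simp add: algebra_simps)
  qed
  have D4: "d (k+4) = (a*b-2) * d (k+2) - d k" for k
  proof -
    have e1: "d (k+4) = b * c (k+3) - d (k+2)" using R2[of "k+2"] by (simp add: numeral_eq_Suc)
    have e2: "c (k+3) = a * d (k+2) - c (k+1)" using R1[of "k+1"] by (simp add: numeral_eq_Suc)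
    show ?thesis using e1 e2 R2[of k] by (simp add: algebra_simps)
  qed
  define Q1 where "Q1 k = b*(c k)^2 + a*(d (k+1))^2 - a*b*c k*d (k+1)" for k
  define Q2 where "Q2 k = b*(c (k+1))^2 + a*(d k)^2 - a*b*d k*c (k+1)" for k
  have Q1s: "Q1 (k+2) = Q1 k" for k
  proof -
    have e2: "d (k+2+1) = b * c (k+2) - d (k+1)" using R2[of "k+1"] by (simp add: numeral_eq_Suc)
    show ?thesis unfolding Q1_def by (rule qinv[OF R1[of k] e2])
  qed
  have Q2s: "Q2 (k+2) = Q2 k" for k
  proof -
    have e2: "c (k+2+1) = a * d (k+2) - c (k+1)" using R1[of "k+1"] by (simp add: numeral_eq_Suc)
    show ?thesis unfolding Q2_def using qinv[OF R2[of k] e2] by (simp add: algebra_simps)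
  qed
  have Q1v: "Q1 (2*n) = a \<and> Q1 (2*n+1) = b" for n
  proof (induction n)
    case 0
    then show ?case unfolding Q1_def using c0 d1 c1 d2 by (simp add: power2_eq_square numeral_eq_Suc)
  next
    case (Suc n)
    then show ?case using Q1s[of "2*n"] Q1s[of "2*n+1"] by (simp add: numeral_eq_Suc)
  qed
  have Q2v: "Q2 (2*n) = b \<and> Q2 (2*n+1) = a" for n
  proof (induction n)
    case 0
    then show ?case unfolding Q2_def using d0 c1 d1 c2 by (simp add: power2_eq_square numeral_eq_Suc)
  next
    case (Suc n)
    then show ?case using Q2s[of "2*n"] Q2s[of "2*n+1"] by (simp add: numeral_eq_Suc)
  qed
  define m where "m = a*b - 2"
  have P4: "a*b \<ge> 4"
  proof (cases "b \<ge> 2")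
    case True
    then have "2*2 \<le> a*b" using assms(1) by (intro mult_mono) auto
    then show ?thesis by simp
  next
    case False
    then have "b = 1" "a \<ge> 5" using assms(2) H by auto
    then show ?thesis by simp
  qed
  have m2: "m \<ge> 2" using P4 unfolding m_def by simp
  have cc: "c (2*(n+2)+j) = m * c (2*(n+1)+j) - c (2*n+j)" for n j
  proof -
    have i1: "2*(n+2)+j = (2*n+j)+4" and i2: "2*(n+1)+j = (2*n+j)+2" by simp_all
    show ?thesis unfolding i1 i2 m_def by (rule C4)
  qed
  have dd: "d (2*(n+2)+j) = m * d (2*(n+1)+j) - d (2*n+j)" for n j
  proof -
    have i1: "2*(n+2)+j = (2*n+j)+4" and i2: "2*(n+1)+j = (2*n+j)+2" by simp_all
    show ?thesis unfolding i1 i2 m_def by (rule D4)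
  qed
  have cc0: "c (2*(n+2)) = m * c (2*(n+1)) - c (2*n)" for n
  proof -
    have i1: "2*(n+2) = (2*n)+4" and i2: "2*(n+1) = (2*n)+2" by simp_all
    show ?thesis unfolding i1 i2 m_def by (rule C4)
  qed
  have dd0: "d (2*(n+2)) = m * d (2*(n+1)) - d (2*n)" for n
  proof -
    have i1: "2*(n+2) = (2*n)+4" and i2: "2*(n+1) = (2*n)+2" by simp_all
    show ?thesis unfolding i1 i2 m_def by (rule D4)
  qed
  define A where "A n = 2*d (2*n+1) - b*c (2*n)" for n
  define B where "B n = 2*c (2*n+1) - a*d (2*n)" for n
  define C where "C n = 2*a*d (2*n+2) - a*b*c (2*n+1)" for n
  define D where "D n = 2*b*c (2*n+2) - a*b*d (2*n+1)" for n
  have Ar: "A (n+2) = m * A (n+1) - A n" for n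
    unfolding A_def cc0 dd by (simp add: algebra_simps)
  have Br: "B (n+2) = m * B (n+1) - B n" for n
    unfolding B_def cc dd0 by (simp add: algebra_simps)
  have Cr: "C (n+2) = m * C (n+1) - C n" for n
    unfolding C_def cc dd by (simp add: algebra_simps)
  have Dr: "D (n+2) = m * D (n+1) - D n" for n
    unfolding D_def cc dd by (simp add: algebra_simps)
  have A0: "A 0 = 2" and A1: "A 1 = a*b - 2" unfolding A_def using c0 d1 c2 d3 by simp_all
  have B0: "B 0 = 2" and B1: "B 1 = a*b - 2" unfolding B_def using d0 c1 d2 c3 by (simp_all add: mult.commute)
  have "C 0 = 2*a*d 2 - a*b*c 1" unfolding C_def by (simp add: numeral_eq_Suc)
  then have C0: "C 0 = a*b" unfolding c1 d2 by simp
  have "C 1 = 2*a*d 4 - a*b*c 3" unfolding C_def by (simp add: numeral_eq_Suc)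
  then have C1: "C 1 = (a*b)*(a*b-3)" unfolding c3 d4 by (simp add: algebra_simps)
  have "D 0 = 2*b*c 2 - a*b*d 1" unfolding D_def by (simp add: numeral_eq_Suc)
  then have D0: "D 0 = a*b" unfolding c2 d1 by simp
  have "D 1 = 2*b*c 4 - a*b*d 3" unfolding D_def by (simp add: numeral_eq_Suc)
  then have D1: "D 1 = (a*b)*(a*b-3)" unfolding d3 c4 by (simp add: algebra_simps)
  have P0: "a*b*(a*b-4) \<ge> 0" using P4 by simp
  have C01: "C 0 \<le> C 1" "D 0 \<le> D 1" unfolding C0 C1 D0 D1 using P0
    by (simp_all add: algebra_simps)
  have PG: "a + b \<le> a*b" if "b \<ge> 2"
  proof -
    have "1*1 \<le> (a-1)*(b-1)" using that assms by (intro mult_mono) auto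
    then show ?thesis by (simp add: algebra_simps)
  qed
  have PF: "a + b \<le> (a*b)*(a*b-3)"
  proof (cases "b \<ge> 2")
    case True
    have "a*b*1 \<le> (a*b)*(a*b-3)" using P4 by (intro mult_left_mono) auto
    then show ?thesis using PG[OF True] by simp
  next
    case False
    then have "b = 1" "a \<ge> 5" using assms(2) H by auto
    moreover have "a*2 \<le> a*(a-3)" using \<open>a \<ge> 5\<close> by (intro mult_left_mono) auto
    moreover have "(a*b)*(a*b-3) = a*(a-3)" using \<open>b = 1\<close> by simp
    ultimately show ?thesis by linarith
  qed
  have Amon: "A 0 \<le> A n" for n by (rule mono_seq_le[OF Ar m2]) (use A0 A1 P4 in auto)
  have Bmon: "B 0 \<le> B n" for n by (rule mono_seq_le[OF Br m2]) (use B0 B1 P4 in auto)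
  have Cmon: "C i \<le> C n" if "i \<le> n" for i n
    by (rule mono_seq_le[OF Cr m2]) (use C0 C01 P4 that in auto)
  have Dmon: "D i \<le> D n" if "i \<le> n" for i n
    by (rule mono_seq_le[OF Dr m2]) (use D0 C01 P4 that in auto)
  have a1: "a \<ge> 1" using assms by simp
  have "k = 2*(k div 2) \<or> k = 2*(k div 2)+1" by presburger
  then obtain n where kn: "k = 2*n \<or> k = 2*n+1" by blast
  have E1: "b * (c k)^2 + a * (d (k+1))^2 - a * b * c k * d (k+1) + a * b * c k - 2 * a * d (k+1) + a
     = Q1 k + a * b * c k - 2 * a * d (k+1) + a" by (simp add: Q1_def)
  have E2: "b * (c (k+1))^2 + a * (d k)^2 - a * b * d k * c (k+1) - 2 * b * c (k+1) + a * b * d k + b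
     = Q2 k - 2 * b * c (k+1) + a * b * d k + b" by (simp add: Q2_def)
  show "b * (c k)^2 + a * (d (k+1))^2 - a * b * c k * d (k+1) + a * b * c k - 2 * a * d (k+1) + a \<le> 0
   \<and> b * (c (k+1))^2 + a * (d k)^2 - a * b * d k * c (k+1) - 2 * b * c (k+1) + a * b * d k + b \<le> 0"
  proof (cases "k = 2*n")
    case True
    have q1: "Q1 k = a" and q2: "Q2 k = b" using Q1v[of n] Q2v[of n] True by auto
    have "a * 2 \<le> a * A n" using Amon[of n] A0 a1 by (intro mult_left_mono) auto
    moreover have "a * A n = 2 * a * d (k+1) - a * b * c k" unfolding A_def True by (simp add: algebra_simps)
    moreover have "b * 2 \<le> b * B n" using Bmon[of n] B0 assms by (intro mult_left_mono) auto
    moreover have "b * B n = 2 * b * c (k+1) - a * b * d k" unfolding B_def True by (simp add: algebra_simps)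
    ultimately show ?thesis unfolding E1 E2 q1 q2 by linarith
  next
    case False
    then have kk: "k = 2*n+1" using kn by simp
    have q1: "Q1 k = b" and q2: "Q2 k = a" using Q1v[of n] Q2v[of n] kk by auto
    have "a + b \<le> C n \<and> a + b \<le> D n"
    proof (cases "n = 0")
      case True
      then have "b \<ge> 2" using H kk by auto
      then show ?thesis using PG C0 D0 True by simp
    next
      case False
      then have "C 1 \<le> C n" "D 1 \<le> D n" using Cmon Dmon by auto
      then show ?thesis using PF C1 D1 by simp
    qed
    moreover have "C n = 2 * a * d (k+1) - a * b * c k" unfolding C_def kk by (simp add: algebra_simps)
    moreover have "D n = 2 * b * c (k+1) - a * b * d k" unfolding D_def kk by (simp add: algebra_simps)
    ultimately show ?thesis unfolding E1 E2 q1 q2 by linarith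
  qed
qed
end
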